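(* Let $f(t)=1+\sum_{i=1}^{d}f_{i-1}t^i$ and $g(t)=1+\sum_{i=1}^{d'}g_{i-1}t^i$ be $f$-polynomials of simplicial complexes. Then (a) the product $f(t)g(t)$ is the $f$-polynomial of a simplicial complex, and (b) the Hadamard product $f(t)\circ g(t)=1+\sum_{i=1}^{\min\{d,d'\}}f_{i-1}g_{i-1}t^i$ is the $f$-polynomial of a simplicial complex.
   Context: The $f$-polynomial of a simplicial complex is $\sum_{i\ge0}f_{i-1}t^i$, where $f_{i-1}$ is the number of faces of cardinality $i$ (constant term $1$ for the empty face). *)

theory Defs
  imports "HOL-Computational_Algebra.Polynomial"
begin

definition simplicial_complex :: "'a set set \<Rightarrow> bool" where
  "simplicial_complex K \<longleftrightarrow> finite K \<and> {} \<in> K \<and> (\<forall>F\<in>K. finite F) \<and>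
     (\<forall>F\<in>K. \<forall>G. G \<subseteq> F \<longrightarrow> G \<in> K)"

text \<open>f-polynomial: sum over faces F of t^|F|, i.e. coefficient of t^i is f_{i-1}.\<close>
definition f_polynomial :: "'a set set \<Rightarrow> int poly" where
  "f_polynomial K = (\<Sum>F\<in>K. monom 1 (card F))"

text \<open>Being the f-polynomial of some simplicial complex (vertices taken in nat;
  every finite complex is isomorphic to one with natural-number vertices).\<close>
definition is_f_polynomial :: "int poly \<Rightarrow> bool" where
  "is_f_polynomial p \<longleftrightarrow> (\<exists>K :: nat set set. simplicial_complex K \<and> f_polynomial K = p)"

definition hadamard_poly :: "int poly \<Rightarrow> int poly \<Rightarrow> int poly" where
  "hadamard_poly p q =
     Poly (map (\<lambda>i. coeff p i * coeff q i) [0..<Suc (max (degree p) (degree q))])"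

end

theory Submission
  imports Defs "HOL-Library.Nat_Bijection"
begin

lemma sc_image:
  fixes h :: "'a \<Rightarrow> 'b"
  assumes "inj h" "simplicial_complex K"
  shows "simplicial_complex ((`) h ` K) \<and> f_polynomial ((`) h ` K) = f_polynomial K"
proof
  show "simplicial_complex ((`) h ` K)"
    unfolding simplicial_complex_def
  proof (intro conjI ballI allI impI)
    show "finite ((`) h ` K)" using assms(2) by (simp add: simplicial_complex_def)
    show "{} \<in> (`) h ` K" using assms(2) unfolding simplicial_complex_def by force
    fix F assume "F \<in> (`) h ` K"
    then obtain F0 where F0: "F0 \<in> K" "F = h ` F0" by auto
    then show "finite F" using assms(2) by (simp add: simplicial_complex_def)
    fix G assume "G \<subseteq> F"
    then have "G = h ` (h -` G \<inter> F0)" using F0 by auto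
    moreover have "h -` G \<inter> F0 \<in> K" using F0 assms(2) unfolding simplicial_complex_def by blast
    ultimately show "G \<in> (`) h ` K" by blast
  qed
  have inj: "inj_on ((`) h) K" using assms(1) by (meson inj_image_eq_iff inj_onI)
  show "f_polynomial ((`) h ` K) = f_polynomial K"
    unfolding f_polynomial_def
    by (simp add: sum.reindex[OF inj] card_image assms(1) inj_on_subset[OF assms(1)])
qed

lemma coeff_fpoly:
  assumes "finite K"
  shows "coeff (f_polynomial K) i = int (card {F\<in>K. card F = i})"
proof -
  have "coeff (f_polynomial K) i = (\<Sum>F\<in>K. if card F = i then 1 else 0)"
    unfolding f_polynomial_def by (simp add: coeff_sum coeff_monom)
  also have "\<dots> = int (card {F\<in>K. card F = i})"
    using assms by (simp add: sum.If_cases Int_def)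
  finally show ?thesis .
qed

lemma prod_part:
  fixes K L :: "nat set set"
  assumes K: "simplicial_complex K" and L: "simplicial_complex L"
  shows "is_f_polynomial (f_polynomial K * f_polynomial L)"
proof -
  define j where "j = (\<lambda>(A::nat set, B::nat set). Inl ` A \<union> (Inr ` B :: (nat + nat) set))"
  define J where "J = j ` (K \<times> L)"
  have inj: "inj_on j (K \<times> L)"
  proof (rule inj_onI)
    fix p q assume "p \<in> K \<times> L" "q \<in> K \<times> L" "j p = j q"
    then have "Inl -` j p = Inl -` j q" "Inr -` j p = Inr -` j q" by auto
    then show "p = q" unfolding j_def by (cases p; cases q) (auto simp: vimage_def image_iff)
  qed
  have fin: "\<And>A. A \<in> K \<Longrightarrow> finite A" "\<And>B. B \<in> L \<Longrightarrow> finite B"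
    using K L by (auto simp: simplicial_complex_def)
  have cardj: "card (j (A, B)) = card A + card B" if "A \<in> K" "B \<in> L" for A B
  proof -
    have "finite A" "finite B" using fin that by auto
    then have "card (Inl ` A \<union> (Inr ` B :: (nat+nat) set)) = card (Inl ` A :: (nat+nat) set) + card (Inr ` B :: (nat+nat) set)"
      by (intro card_Un_disjoint) auto
    then show ?thesis unfolding j_def by (simp add: card_image)
  qed
  have scJ: "simplicial_complex J"
    unfolding simplicial_complex_def
  proof (intro conjI ballI allI impI)
    show "finite J" using K L by (simp add: J_def simplicial_complex_def)
    have "{} \<in> K" "{} \<in> L" using K L by (auto simp: simplicial_complex_def)
    then show "{} \<in> J" unfolding J_def j_def by force
    fix F assume "F \<in> J"
    then obtain A B where AB: "A \<in> K" "B \<in> L" "F = j (A, B)" unfolding J_def by auto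
    then show "finite F" using fin by (simp add: j_def)
    fix G assume G: "G \<subseteq> F"
    have "G = j (Inl -` G, Inr -` G)" unfolding j_def
    proof (rule set_eqI)
      fix x show "x \<in> G \<longleftrightarrow> x \<in> (case (Inl -` G, Inr -` G) of (A, B) \<Rightarrow> Inl ` A \<union> Inr ` B)"
        by (cases x) auto
    qed
    moreover have "Inl -` G \<subseteq> A" "Inr -` G \<subseteq> B" using G AB by (auto simp: j_def)
    then have "Inl -` G \<in> K" "Inr -` G \<in> L" using AB K L by (auto simp: simplicial_complex_def)
    ultimately show "G \<in> J" unfolding J_def by blast
  qed
  have "f_polynomial J = (\<Sum>p\<in>K \<times> L. monom 1 (card (j p)))"
    unfolding f_polynomial_def J_def by (simp add: sum.reindex[OF inj])
  also have "\<dots> = (\<Sum>p\<in>K \<times> L. monom 1 (card (fst p)) * monom 1 (card (snd p)))"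
    by (rule sum.cong) (auto simp: cardj mult_monom)
  also have "\<dots> = (\<Sum>A\<in>K. \<Sum>B\<in>L. monom 1 (card A) * monom 1 (card B))"
    by (simp add: sum.cartesian_product split_beta)
  also have "\<dots> = f_polynomial K * f_polynomial L"
    unfolding f_polynomial_def by (simp add: sum_product)
  finally have eq: "f_polynomial J = f_polynomial K * f_polynomial L" .
  define h where "h = case_sum (\<lambda>x::nat. 2*x) (\<lambda>x. 2*x+1)"
  have "inj h" unfolding h_def
  proof (rule injI)
    fix x y :: "nat + nat" assume "case_sum (\<lambda>x::nat. 2*x) (\<lambda>x. 2*x+1) x = case_sum (\<lambda>x::nat. 2*x) (\<lambda>x. 2*x+1) y"
    then show "x = y" by (cases x; cases y; simp; presburger)
  qed
  from sc_image[OF this scJ] eq show ?thesis unfolding is_f_polynomial_def by metis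
qed

definition Z :: "nat set \<Rightarrow> nat set \<Rightarrow> (nat \<times> nat) set" where
  "Z A B = set (zip (sorted_list_of_set A) (sorted_list_of_set B))"

lemma Z_fst: "card A = card B \<Longrightarrow> fst ` Z A B = set (sorted_list_of_set A)"
  unfolding Z_def by (metis length_sorted_list_of_set map_fst_zip set_map)

lemma Z_snd: "card A = card B \<Longrightarrow> snd ` Z A B = set (sorted_list_of_set B)"
  unfolding Z_def by (metis length_sorted_list_of_set map_snd_zip set_map)

lemma Z_card: "card A = card B \<Longrightarrow> card (Z A B) = card A"
  unfolding Z_def
  by (simp add: distinct_card distinct_zipI1)

lemma Z_sub:
  assumes "finite A" "finite B" "card A = card B" "G \<subseteq> Z A B"
  shows "card (fst ` G) = card (snd ` G) \<and> G = Z (fst ` G) (snd ` G)"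
proof -
  define xs where "xs = sorted_list_of_set A"
  define ys where "ys = sorted_list_of_set B"
  have lens: "length xs = length ys" using assms by (simp add: xs_def ys_def)
  define zs where "zs = filter (\<lambda>p. p \<in> G) (zip xs ys)"
  have Gz: "set zs = G" using assms(4) by (auto simp: zs_def Z_def xs_def ys_def)
  have sx: "sorted_wrt (<) xs" "sorted_wrt (<) ys"
    by (simp_all add: xs_def ys_def strict_sorted_list_of_set)
  have "sorted_wrt (\<lambda>p q. fst p < fst q) (zip xs ys)"
    using sx lens by (metis map_fst_zip sorted_wrt_map)
  then have s1: "sorted_wrt (<) (map fst zs)"
    unfolding zs_def sorted_wrt_map by (rule sorted_wrt_filter)
  have "sorted_wrt (\<lambda>p q. snd p < snd q) (zip xs ys)"
    using sx lens by (metis map_snd_zip sorted_wrt_map)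
  then have s2: "sorted_wrt (<) (map snd zs)"
    unfolding zs_def sorted_wrt_map by (rule sorted_wrt_filter)
  have e1: "sorted_list_of_set (fst ` G) = map fst zs"
    using s1 Gz by (metis list.set_map sorted_list_of_set.idem_if_sorted_distinct strict_sorted_iff)
  have e2: "sorted_list_of_set (snd ` G) = map snd zs"
    using s2 Gz by (metis list.set_map sorted_list_of_set.idem_if_sorted_distinct strict_sorted_iff)
  have fG: "finite G" using Gz by auto
  have "card (fst ` G) = card (snd ` G)"
    using e1 e2 fG by (metis finite_imageI length_map length_sorted_list_of_set)
  moreover have "G = Z (fst ` G) (snd ` G)"
    unfolding Z_def e1 e2 zip_map_fst_snd Gz ..
  ultimately show ?thesis by blast
qed

lemma coeff_hadamard: "coeff (hadamard_poly p q) i = coeff p i * coeff q i"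
proof (cases "i \<le> max (degree p) (degree q)")
  case True
  then show ?thesis unfolding hadamard_poly_def
    by (simp add: nth_default_def del: upt_Suc)
next
  case False
  then have "coeff p i = 0" "coeff q i = 0" by (auto intro: coeff_eq_0)
  with False show ?thesis unfolding hadamard_poly_def
    by (simp add: nth_default_def del: upt_Suc)
qed

lemma had_part:
  fixes K L :: "nat set set"
  assumes K: "simplicial_complex K" and L: "simplicial_complex L"
  shows "is_f_polynomial (hadamard_poly (f_polynomial K) (f_polynomial L))"
proof -
  have fin: "\<And>A. A \<in> K \<Longrightarrow> finite A" "\<And>B. B \<in> L \<Longrightarrow> finite B"
    using K L by (auto simp: simplicial_complex_def)
  define P where "P = {(A,B) \<in> K \<times> L. card A = card B}"
  define H where "H = (\<lambda>(A,B). Z A B) ` P"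
  have ZfA: "fst ` Z A B = A" "snd ` Z A B = B" if "(A,B) \<in> P" for A B
    using that fin by (auto simp: P_def Z_fst Z_snd)
  have inj: "inj_on (\<lambda>(A,B). Z A B) P"
  proof (rule inj_onI)
    fix p q assume pq: "p \<in> P" "q \<in> P" "(\<lambda>(A,B). Z A B) p = (\<lambda>(A,B). Z A B) q"
    obtain A B where p: "p = (A,B)" by (cases p)
    obtain A' B' where q: "q = (A',B')" by (cases q)
    have e: "Z A B = Z A' B'" using pq p q by simp
    have "A = A'" using ZfA(1)[of A B] ZfA(1)[of A' B'] pq p q e by simp
    moreover have "B = B'" using ZfA(2)[of A B] ZfA(2)[of A' B'] pq p q e by simp
    ultimately show "p = q" using p q by simp
  qed
  have scH: "simplicial_complex H"
    unfolding simplicial_complex_def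
  proof (intro conjI ballI allI impI)
    have "P \<subseteq> K \<times> L" by (auto simp: P_def)
    moreover have "finite (K \<times> L)" using K L by (simp add: simplicial_complex_def)
    ultimately show "finite H" unfolding H_def by (meson finite_subset finite_imageI)
    have "{} \<in> K" "{} \<in> L" using K L by (auto simp: simplicial_complex_def)
    then have "({},{}) \<in> P" by (simp add: P_def)
    moreover have "Z {} {} = {}" by (simp add: Z_def)
    ultimately show "{} \<in> H" unfolding H_def by force
    fix F assume "F \<in> H"
    then obtain A B where AB: "(A,B) \<in> P" "F = Z A B" unfolding H_def by auto
    then show "finite F" by (simp add: Z_def)
    fix G assume G: "G \<subseteq> F"
    have cAB: "finite A" "finite B" "card A = card B" using AB fin by (auto simp: P_def)
    from Z_sub[OF cAB G[unfolded AB(2)]] have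
      c: "card (fst ` G) = card (snd ` G)" and e: "G = Z (fst ` G) (snd ` G)" by auto
    have "fst ` G \<subseteq> A" "snd ` G \<subseteq> B" using G AB ZfA by blast+
    then have "fst ` G \<in> K" "snd ` G \<in> L" using AB K L by (auto simp: simplicial_complex_def P_def)
    with c have "(fst ` G, snd ` G) \<in> P" by (simp add: P_def)
    with e show "G \<in> H" unfolding H_def by force
  qed
  have "f_polynomial H = hadamard_poly (f_polynomial K) (f_polynomial L)"
  proof (rule poly_eqI)
    fix i
    define Ki where "Ki = {A\<in>K. card A = i}"
    define Li where "Li = {B\<in>L. card B = i}"
    have sub: "Ki \<times> Li \<subseteq> P" by (auto simp: Ki_def Li_def P_def)
    have "{S\<in>H. card S = i} = (\<lambda>(A,B). Z A B) ` (Ki \<times> Li)"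
    proof -
      have "card (Z A B) = card A" if "(A,B) \<in> P" for A B using that by (simp add: P_def Z_card)
      then show ?thesis unfolding H_def using sub by (auto simp: Ki_def Li_def P_def)
    qed
    then have "card {S\<in>H. card S = i} = card Ki * card Li"
      by (simp add: card_image inj_on_subset[OF inj sub] card_cartesian_product)
    moreover have "finite H" "finite K" "finite L" using scH K L by (auto simp: simplicial_complex_def)
    ultimately show "coeff (f_polynomial H) i = coeff (hadamard_poly (f_polynomial K) (f_polynomial L)) i"
      by (simp add: coeff_fpoly coeff_hadamard Ki_def Li_def)
  qed
  moreover note sc_image[OF inj_prod_encode scH]
  ultimately show ?thesis unfolding is_f_polynomial_def by auto
qed

theorem proposition4p3:
  fixes f g :: "int poly"
  assumes "is_f_polynomial f" and "is_f_polynomial g"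
  shows "is_f_polynomial (f * g) \<and> is_f_polynomial (hadamard_poly f g)"
proof -
  obtain K :: "nat set set" where K: "simplicial_complex K" "f_polynomial K = f"
    using assms(1) unfolding is_f_polynomial_def by blast
  obtain L :: "nat set set" where L: "simplicial_complex L" "f_polynomial L = g"
    using assms(2) unfolding is_f_polynomial_def by blast
  show ?thesis using prod_part[OF K(1) L(1)] had_part[OF K(1) L(1)] K(2) L(2) by simp
qed

end
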